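(* Let $f\in C_u(\mathbb{R})$ and let $H=-\frac{d^2}{dx^2}+x^2$ be the harmonic oscillator on $L^2(\mathbb{R})$. Then there is an entire function $\rho$ on $\mathbb{C}$ such that for $\mathrm{Re}(s)>1$, \[\Gamma(s)\,\mathrm{Tr}(fH^{-s})=\frac{1}{2\sqrt{\pi}}\int_0^1\int_{\mathbb{R}} t^{s-1}\,\mathrm{cosech}\,t\; f\big(x\sqrt{\coth t}\big)\,e^{-x^2}\,dx\,dt+\rho(s).\]
   Context: $C_u(\mathbb{R})$ denotes bounded uniformly continuous functions on $\mathbb{R}$, acting on $L^2(\mathbb{R})$ by multiplication. $H$ is the self-adjoint harmonic oscillator, with eigenvalues $1,3,5,\dots$; $fH^{-s}$ is trace class for $\mathrm{Re}(s)>1$. *)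

theory Defs
  imports "HOL-Analysis.Analysis" "HOL-Complex_Analysis.Complex_Analysis"
begin

fun hermite_poly :: "nat \<Rightarrow> real \<Rightarrow> real" where
  "hermite_poly 0 x = 1"
| "hermite_poly (Suc 0) x = 2 * x"
| "hermite_poly (Suc (Suc n)) x = 2 * x * hermite_poly (Suc n) x - 2 * real (Suc n) * hermite_poly n x"

text \<open>Normalised Hermite functions: the orthonormal eigenbasis of the harmonic oscillator
  H = -d^2/dx^2 + x^2 on L^2(R), with H h_n = (2n+1) h_n.\<close>
definition hermite_fun :: "nat \<Rightarrow> real \<Rightarrow> real" where
  "hermite_fun n x = hermite_poly n x * exp (- (x^2) / 2) / sqrt (2 ^ n * fact n * sqrt pi)"

text \<open>Tr(f H^(-s)) computed in the orthonormal eigenbasis (h_n) of H: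
  the sum over n of <f H^(-s) h_n, h_n> = (2n+1)^(-s) * integral of f(x) h_n(x)^2 dx.\<close>
definition osc_trace :: "(real \<Rightarrow> complex) \<Rightarrow> complex \<Rightarrow> complex" where
  "osc_trace f s = (\<Sum>n. (of_nat (2 * n + 1)) powr (- s) *
      (LINT x|lborel. f x * complex_of_real ((hermite_fun n x)^2)))"

end

theory Submission
  imports Defs "HOL-Probability.Probability" "HOL-Computational_Algebra.Polynomial_FPS"
begin

definition hu :: "nat \<Rightarrow> real \<Rightarrow> real" where
  "hu n x = (hermite_poly n x)^2 / (2^n * fact n)"
definition hv :: "nat \<Rightarrow> real \<Rightarrow> real" where
  "hv n x = (if n = 0 then 0 else hermite_poly n x * hermite_poly (n-1) x / (2^(n-1) * fact (n-1)))"

lemma hu_0 [simp]: "hu 0 x = 1" by (simp add: hu_def)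
lemma hu_1: "hu (Suc 0) x = 2*x^2" by (simp add: hu_def power2_eq_square)
lemma hu_nonneg: "hu n x \<ge> 0" by (simp add: hu_def)

lemma hv_Suc: "hv (Suc n) x = 2*x*hu n x - hv n x"
proof (cases n)
  case 0 then show ?thesis by (simp add: hv_def hu_def)
next
  case (Suc m)
  define a where "a = hermite_poly (Suc m) x"
  define b where "b = hermite_poly m x"
  have F: "(fact (Suc m)::real) = real (Suc m) * fact m" by simp
  have P: "(fact m :: real) > 0" by simp
  have e: "hermite_poly (Suc (Suc m)) x = 2*x*a - 2 * real (Suc m) * b" by (simp add: a_def b_def)
  show ?thesis unfolding Suc hv_def hu_def
    apply (simp only: e a_def[symmetric] b_def[symmetric] diff_Suc_1 F power_Suc)
    using P apply (simp add: field_simps power2_eq_square del: of_nat_Suc)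
    done
qed

lemma hu_SS: "real (Suc (Suc m)) * hu (Suc (Suc m)) x = 2*x^2*hu (Suc m) x - 2*x*hv (Suc m) x + real (Suc m) * hu m x"
proof -
  define a where "a = hermite_poly (Suc m) x"
  define b where "b = hermite_poly m x"
  have F: "(fact (Suc (Suc m))::real) = real (Suc (Suc m)) * (real (Suc m) * fact m)" by simp
  have F1: "(fact (Suc m)::real) = real (Suc m) * fact m" by simp
  have P: "(fact m :: real) > 0" by simp
  have e: "hermite_poly (Suc (Suc m)) x = 2*x*a - 2 * real (Suc m) * b" by (simp add: a_def b_def)
  show ?thesis unfolding hv_def hu_def
    apply (simp only: e a_def[symmetric] b_def[symmetric] diff_Suc_1 F F1 power_Suc)
    using P apply (simp add: field_simps power2_eq_square del: of_nat_Suc)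
    done
qed

lemma hv_sq: "(hv (Suc n) x)^2 = 2 * real (Suc n) * hu (Suc n) x * hu n x"
proof -
  have F1: "(fact (Suc n)::real) = real (Suc n) * fact n" by simp
  have P: "(fact n :: real) > 0" by simp
  show ?thesis unfolding hv_def hu_def
    apply (simp only: F1 power_Suc diff_Suc_1 if_False nat.distinct)
    using P apply (simp add: field_simps power2_eq_square del: of_nat_Suc)
    done
qed


lemma hu_rec3: "real (m+2) * hu (m+2) x = (2*x^2 - real m - 1) * hu (m+1) x + (real m + 1 - 2*x^2) * hu m x + real m * hu (m - 1) x"
proof (cases m)
  case 0
  have "hv (Suc 0) x = 2*x" using hv_Suc[of 0 x] by (simp add: hv_def)
  then show ?thesis using hu_SS[of 0 x] 0 by (simp add: hu_1 algebra_simps power2_eq_square)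
next
  case (Suc k)
  have e1: "real (Suc (Suc (Suc k))) * hu (Suc (Suc (Suc k))) x = 2*x^2*hu (Suc (Suc k)) x - 2*x*(2*x*hu (Suc k) x - hv (Suc k) x) + real (Suc (Suc k)) * hu (Suc k) x"
    using hu_SS[of "Suc k" x] hv_Suc[of "Suc k" x] by simp
  have e2: "real (Suc (Suc k)) * hu (Suc (Suc k)) x = 2*x^2*hu (Suc k) x - 2*x*hv (Suc k) x + real (Suc k) * hu k x"
    using hu_SS[of k x] by simp
  show ?thesis unfolding Suc using e1 e2 by (simp add: algebra_simps power2_eq_square)
qed

lemma hv_bound:
  assumes d: "\<delta> > 0"
  shows "\<bar>2*x*hv (Suc m) x\<bar> \<le> \<delta> * real (Suc m) * hu m x + (2*x^2/\<delta>) * hu (Suc m) x"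
proof -
  define a where "a = \<delta> * real (Suc m) * hu m x"
  define b where "b = (2*x^2/\<delta>) * hu (Suc m) x"
  have a0: "a \<ge> 0" using d hu_nonneg[of m x] by (simp add: a_def)
  have b0: "b \<ge> 0" using d hu_nonneg[of "Suc m" x] by (simp add: b_def)
  have "(2*x*hv (Suc m) x)^2 = 4*a*b"
    using d hv_sq[of m x] by (simp add: power_mult_distrib a_def b_def field_simps power2_eq_square del: of_nat_Suc)
  also have "\<dots> \<le> (a+b)^2" using sum_squares_ge_zero[of "a-b" 0]
    by (simp add: power2_eq_square algebra_simps)
  finally have "(2*x*hv (Suc m) x)^2 \<le> (a+b)^2" .
  hence "\<bar>2*x*hv (Suc m) x\<bar> \<le> \<bar>a+b\<bar>" by (simp add: abs_le_square_iff)
  with a0 b0 show ?thesis by (simp add: a_def b_def)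
qed

lemma hu_step:
  assumes d: "\<delta> > 0" and m: "2*x^2*(1+1/\<delta>) \<le> \<delta> * real (m+2)"
  shows "hu (m+2) x \<le> (1+2*\<delta>) * max (hu (m+1) x) (hu m x)"
proof -
  define A where "A = 2*x^2*(1+1/\<delta>)"
  have A0: "A \<ge> 0" using d by (simp add: A_def)
  have u0: "hu m x \<ge> 0" "hu (m+1) x \<ge> 0" by (simp_all add: hu_nonneg)
  have "real (m+2) * hu (m+2) x \<le> A * hu (m+1) x + (1+\<delta>) * real (m+1) * hu m x"
    using hu_SS[of m x] hv_bound[OF d, of x m] d
    by (simp add: A_def algebra_simps abs_le_iff)
  also have "\<dots> \<le> A * hu (m+1) x + (1+\<delta>) * real (m+2) * hu m x"
    using d u0 by (intro add_left_mono mult_right_mono mult_left_mono) auto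
  also have "A * hu (m+1) x \<le> \<delta> * real (m+2) * hu (m+1) x"
    using m u0 by (intro mult_right_mono) (auto simp: A_def)
  finally have "real (m+2) * hu (m+2) x \<le> real (m+2) * (\<delta> * hu (m+1) x + (1+\<delta>) * hu m x)"
    by (simp add: algebra_simps)
  hence "hu (m+2) x \<le> \<delta> * hu (m+1) x + (1+\<delta>) * hu m x"
    by (subst (asm) mult_le_cancel_left_pos) auto
  also have "\<dots> \<le> \<delta> * max (hu (m+1) x) (hu m x) + (1+\<delta>) * max (hu (m+1) x) (hu m x)"
    using d by (intro add_mono mult_left_mono) auto
  finally show ?thesis by (simp add: algebra_simps)
qed

lemma hu_summable:
  assumes r: "0 \<le> r" "r < 1"
  shows "summable (\<lambda>n. hu n x * r^n)"
proof -
  define \<delta> where "\<delta> = (1-r)/(2*(1+r))"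
  define \<gamma> where "\<gamma> = 1 + 2*\<delta>"
  have d: "\<delta> > 0" using r by (simp add: \<delta>_def)
  have g1: "\<gamma> \<ge> 1" using d by (simp add: \<gamma>_def)
  have gr: "\<gamma> * r < 1" using r by (simp add: \<gamma>_def \<delta>_def field_simps)
  obtain N :: nat where N: "2*x^2*(1+1/\<delta>)/\<delta> \<le> real N" using real_arch_simple by blast
  have step: "hu (m+2) x \<le> \<gamma> * max (hu (m+1) x) (hu m x)" if "m \<ge> N" for m
  proof (rule hu_step[OF d, folded \<gamma>_def])
    have "2*x^2*(1+1/\<delta>) \<le> \<delta> * real N" using N d by (simp add: field_simps)
    also have "\<dots> \<le> \<delta> * real (m+2)" using that d by (intro mult_left_mono) auto
    finally show "2*x^2*(1+1/\<delta>) \<le> \<delta> * real (m+2)" .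
  qed
  define K where "K = max (hu N x / \<gamma>^N) (hu (N+1) x / \<gamma>^(N+1))"
  have gp: "\<And>n. \<gamma>^n > 0" using g1 by simp
  have bnd: "hu (N+k) x \<le> K * \<gamma>^(N+k) \<and> hu (N+k+1) x \<le> K * \<gamma>^(N+k+1)" for k
  proof (induction k)
    case 0
    have "hu N x / \<gamma>^N \<le> K" "hu (N+1) x / \<gamma>^(N+1) \<le> K" by (simp_all add: K_def)
    hence "hu N x \<le> K * \<gamma>^N" "hu (N+1) x \<le> K * \<gamma>^(N+1)"
      using gp[of N] gp[of "N+1"] by (simp_all add: pos_divide_le_eq del: power_Suc)
    then show ?case by simp
  next
    case (Suc k)
    have K0: "K \<ge> 0" using gp[of N] hu_nonneg[of N x] by (simp add: K_def le_max_iff_disj)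
    have "hu (N+k+2) x \<le> \<gamma> * max (hu (N+k+1) x) (hu (N+k) x)" using step[of "N+k"] by simp
    also have "\<dots> \<le> \<gamma> * max (K * \<gamma>^(N+k+1)) (K * \<gamma>^(N+k))"
      using Suc.IH g1 by (intro mult_left_mono max.mono) auto
    also have "max (K * \<gamma>^(N+k+1)) (K * \<gamma>^(N+k)) = K * \<gamma>^(N+k+1)"
      using K0 g1 by (intro max_absorb1 mult_left_mono) (auto intro: power_increasing)
    finally have "hu (N+k+2) x \<le> K * \<gamma>^(N+k+2)" by (simp add: algebra_simps)
    then show ?case using Suc.IH by simp
  qed
  have "\<gamma>*r \<ge> 0" using r g1 by simp
  hence S: "summable (\<lambda>n. K * (\<gamma>*r)^n)" using gr
    by (intro summable_mult summable_geometric) simp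
  have E: "\<forall>\<^sub>F n in sequentially. norm (hu n x * r^n) \<le> K * (\<gamma>*r)^n"
    using eventually_ge_at_top[of N]
  proof eventually_elim
    case (elim n)
    then obtain k where k: "n = N + k" using le_Suc_ex by blast
    have "norm (hu n x * r^n) = hu n x * r^n" using r hu_nonneg[of n x] by simp
    also have "\<dots> \<le> K * \<gamma>^n * r^n" using bnd[of k] k r by (intro mult_right_mono) auto
    finally show ?case by (simp add: power_mult_distrib mult.assoc)
  qed
  show ?thesis by (rule summable_comparison_test_ev[OF E S])
qed


definition Ufps :: "real \<Rightarrow> real fps" where "Ufps x = Abs_fps (\<lambda>n. hu n x)"

lemma Ufps_radius: "fps_conv_radius (Ufps x) \<ge> 1"
  unfolding fps_conv_radius_def Ufps_def fps_nth_Abs_fps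
  by (intro conv_radius_geI_ex') (auto intro!: hu_summable)

lemma Ufps_coeff:
  "(fps_deriv (Ufps x) + fps_X * fps_deriv (Ufps x) - fps_X^2 * fps_deriv (Ufps x) - fps_X^3 * fps_deriv (Ufps x)) $ n
   = (fps_const (2*x^2) * Ufps x + fps_const (1-2*x^2) * (fps_X * Ufps x) + fps_X^2 * Ufps x) $ n"
proof -
  have "n = 0 \<or> n = 1 \<or> n = 2 \<or> (\<exists>m. n = m + 3)" by presburger
  moreover {
    assume "n = 0" hence ?thesis by (simp add: Ufps_def fps_X_power_mult_nth hu_1)
  } moreover {
    assume n: "n = 1"
    have "real (0+2) * hu (0+2) x = (2*x^2 - real 0 - 1) * hu (0+1) x + (real 0 + 1 - 2*x^2) * hu 0 x + real 0 * hu (0 - 1) x"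
      by (rule hu_rec3)
    hence ?thesis using n by (simp add: Ufps_def fps_X_power_mult_nth hu_1 numeral_2_eq_2 algebra_simps)
  } moreover {
    assume n: "n = 2"
    have "real (1+2) * hu (1+2) x = (2*x^2 - real 1 - 1) * hu (1+1) x + (real 1 + 1 - 2*x^2) * hu 1 x + real 1 * hu (1 - 1) x"
      by (rule hu_rec3)
    hence ?thesis using n by (simp add: Ufps_def fps_X_power_mult_nth hu_1 numeral_2_eq_2 numeral_3_eq_3 algebra_simps)
  } moreover {
    fix m assume n: "n = m + 3"
    have "real ((m+2)+2) * hu ((m+2)+2) x = (2*x^2 - real (m+2) - 1) * hu ((m+2)+1) x + (real (m+2) + 1 - 2*x^2) * hu (m+2) x + real (m+2) * hu ((m+2) - 1) x"
      by (rule hu_rec3)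
    hence ?thesis using n by (simp add: Ufps_def fps_X_power_mult_nth algebra_simps numeral_2_eq_2 numeral_3_eq_3)
  }
  ultimately show ?thesis by blast
qed

lemma Ufps_ode:
  "fps_of_poly [:1,1,-1,-1:] * fps_deriv (Ufps x) = fps_of_poly [:2*x^2, 1-2*x^2, 1:] * Ufps x"
proof -
  have "fps_of_poly [:1,1,-1,-1:] * fps_deriv (Ufps x) =
    fps_deriv (Ufps x) + fps_X * fps_deriv (Ufps x) - fps_X^2 * fps_deriv (Ufps x) - fps_X^3 * fps_deriv (Ufps x)"
    by (simp add: fps_of_poly_pCons algebra_simps power2_eq_square power3_eq_cube fps_const_neg[symmetric])
  also have "\<dots> = fps_const (2*x^2) * Ufps x + fps_const (1-2*x^2) * (fps_X * Ufps x) + fps_X^2 * Ufps x"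
    by (rule fps_ext, rule Ufps_coeff)
  also have "\<dots> = fps_of_poly [:2*x^2, 1-2*x^2, 1:] * Ufps x"
    by (simp add: fps_of_poly_pCons algebra_simps power2_eq_square)
  finally show ?thesis .
qed

lemma Ufps_rad_lt: "\<bar>r::real\<bar> < 1 \<Longrightarrow> ereal (norm r) < fps_conv_radius (Ufps x)"
proof -
  assume "\<bar>r\<bar> < 1"
  hence "ereal (norm r) < ereal 1" by simp
  also have "ereal 1 \<le> fps_conv_radius (Ufps x)" using Ufps_radius[of x] by (simp add: one_ereal_def)
  finally show ?thesis .
qed

lemma Ufps_rad_lt': "\<bar>r::real\<bar> < 1 \<Longrightarrow> ereal (norm r) < fps_conv_radius (fps_deriv (Ufps x))"
  using Ufps_rad_lt[of r x] fps_conv_radius_deriv[of "Ufps x"] by (simp add: order.strict_trans2)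

lemma Ue_ode:
  assumes "\<bar>r\<bar> < 1"
  shows "(1 + r - r^2 - r^3) * eval_fps (fps_deriv (Ufps x)) r = (2*x^2 + (1-2*x^2)*r + r^2) * eval_fps (Ufps x) r"
proof -
  have "eval_fps (fps_of_poly [:1,1,-1,-1:] * fps_deriv (Ufps x)) r = eval_fps (fps_of_poly [:2*x^2, 1-2*x^2, 1:] * Ufps x) r"
    by (simp only: Ufps_ode)
  hence "poly [:1,1,-1,-1:] r * eval_fps (fps_deriv (Ufps x)) r = poly [:2*x^2, 1-2*x^2, 1:] r * eval_fps (Ufps x) r"
    using Ufps_rad_lt[OF assms, of x] Ufps_rad_lt'[OF assms, of x]
    by (subst (asm) (1 2) eval_fps_mult) auto
  thus ?thesis by (simp add: algebra_simps power2_eq_square power3_eq_cube)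
qed

lemma Ue_sq:
  assumes "\<bar>r\<bar> < 1"
  shows "(eval_fps (Ufps x) r)^2 * (1 - r^2) * exp (-4*x^2*r/(1+r)) = 1"
proof -
  define Ue where "Ue = eval_fps (Ufps x)"
  define W where "W = (\<lambda>r. Ue r ^2 * (1 - r^2) * exp (-4*x^2*r/(1+r)))"
  have "\<exists>c. \<forall>y\<in>{-1<..<1}. W y = c"
  proof (rule has_field_derivative_zero_constant)
    fix y :: real assume y: "y \<in> {-1<..<1}"
    hence ay: "\<bar>y\<bar> < 1" by auto
    have y1: "1 + y > 0" using y by auto
    have y2: "1 + (y*y + y*2) \<noteq> 0" using y1 proof -
      have "1 + (y*y + y*2) = (1+y)*(1+y)" by (simp add: algebra_simps)
      thus ?thesis using y1 by simp
    qed
    define D where "D = eval_fps (fps_deriv (Ufps x)) y"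
    have dU: "(Ue has_field_derivative D) (at y)"
      unfolding Ue_def D_def by (rule has_field_derivative_eval_fps[OF Ufps_rad_lt[OF ay]])
    have ode: "(1 + y - y^2 - y^3) * D = (2*x^2 + (1-2*x^2)*y + y^2) * Ue y"
      using Ue_ode[OF ay, of x] by (simp add: D_def Ue_def)
    have q: "((\<lambda>r. -4*x^2*r/(1+r)) has_field_derivative (-4*x^2/(1+y)^2)) (at y)"
      using y1 y2 by (auto intro!: derivative_eq_intros simp: field_simps power2_eq_square)
    have dE: "((\<lambda>r. exp (-4*x^2*r/(1+r))) has_field_derivative exp (-4*x^2*y/(1+y)) * (-4*x^2/(1+y)^2)) (at y)"
      using DERIV_chain2[OF DERIV_exp q] by simp
    have d2: "((\<lambda>r. Ue r ^2 * (1 - r^2)) has_field_derivative (2*Ue y*D*(1-y^2) + Ue y^2 * (-(2*y)))) (at y)"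
      by (auto intro!: derivative_eq_intros dU simp: power2_eq_square algebra_simps)
    have "(W has_field_derivative
       (2 * Ue y * D * (1 - y^2) * exp (-4*x^2*y/(1+y)) + Ue y^2 * (-(2*y)) * exp (-4*x^2*y/(1+y))
        + Ue y^2 * (1 - y^2) * (exp (-4*x^2*y/(1+y)) * (-4*x^2/(1+y)^2)))) (at y)"
      unfolding W_def using DERIV_mult[OF d2 dE] by (simp add: algebra_simps)
    also have "2 * Ue y * D * (1 - y^2) * exp (-4*x^2*y/(1+y)) + Ue y^2 * (-(2*y)) * exp (-4*x^2*y/(1+y))
        + Ue y^2 * (1 - y^2) * (exp (-4*x^2*y/(1+y)) * (-4*x^2/(1+y)^2)) =
        exp (-4*x^2*y/(1+y)) * Ue y * (2 * ((1 + y - y^2 - y^3) * D) - 2*y*(1+y)*Ue y - 4*x^2*(1-y)*Ue y) / (1+y)"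
      using y1 y2 by (simp add: field_simps power2_eq_square power3_eq_cube)
    also have "\<dots> = 0" unfolding ode by (simp add: algebra_simps power2_eq_square)
    finally show "(W has_field_derivative 0) (at y within {-1<..<1})"
      by (rule has_field_derivative_at_within)
  qed auto
  then obtain c where c: "\<And>y. y \<in> {-1<..<1} \<Longrightarrow> W y = c" by blast
  have "W 0 = 1" by (simp add: W_def Ue_def eval_fps_at_0 Ufps_def)
  hence "W r = 1" using c[of r] c[of 0] assms by (auto simp: abs_less_iff)
  thus ?thesis by (simp add: W_def Ue_def)
qed

lemma Ue_nonneg: "0 \<le> r \<Longrightarrow> r < 1 \<Longrightarrow> eval_fps (Ufps x) r \<ge> 0"
  unfolding eval_fps_def Ufps_def fps_nth_Abs_fps
  by (intro suminf_nonneg hu_summable) (auto intro!: mult_nonneg_nonneg hu_nonneg)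

lemma mehler:
  assumes r: "0 \<le> r" "r < 1"
  shows "(\<lambda>n. hu n x * r^n) sums (exp (2*x^2*r/(1+r)) / sqrt (1-r^2))"
proof -
  have s: "(\<lambda>n. hu n x * r^n) sums eval_fps (Ufps x) r"
    using sums_eval_fps[OF Ufps_rad_lt[of r x]] r by (simp add: Ufps_def)
  have "r * r < 1 * 1" using r by (intro mult_strict_mono') auto
  hence p: "1 - r^2 > 0" by (simp add: power2_eq_square)
  have "(eval_fps (Ufps x) r)^2 = exp (4*x^2*r/(1+r)) / (1 - r^2)"
    using Ue_sq[of r x] r p by (simp add: field_simps exp_minus)
  also have "\<dots> = (exp (2*x^2*r/(1+r)) / sqrt (1-r^2))^2"
    using p by (simp add: power_divide exp_double[symmetric] algebra_simps)
  finally have "eval_fps (Ufps x) r = exp (2*x^2*r/(1+r)) / sqrt (1-r^2)"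
    using Ue_nonneg[OF r, of x] p by (subst (asm) power2_eq_iff_nonneg) auto
  with s show ?thesis by simp
qed


lemma hermite_poly_cont2: "continuous_on UNIV (hermite_poly n) \<and> continuous_on UNIV (hermite_poly (Suc n))"
proof (induction n)
  case 0
  have "hermite_poly 0 = (\<lambda>x. 1)" "hermite_poly (Suc 0) = (\<lambda>x. 2*x)" by (auto intro!: ext)
  thus ?case by (auto intro!: continuous_intros)
next
  case (Suc n)
  have "hermite_poly (Suc (Suc n)) = (\<lambda>x. 2*x*hermite_poly (Suc n) x - 2*real (Suc n)*hermite_poly n x)"
    by (rule ext) simp
  thus ?case using Suc by (auto intro!: continuous_intros)
qed

lemma hermite_poly_cont: "continuous_on UNIV (hermite_poly n)"
  using hermite_poly_cont2 by blast

lemma hermite_poly_meas [measurable]: "hermite_poly n \<in> borel_measurable borel"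
  by (rule borel_measurable_continuous_onI[OF hermite_poly_cont])

lemma hermite_fun_cont: "continuous_on UNIV (hermite_fun n)"
  unfolding hermite_fun_def[abs_def]
  by (intro continuous_intros continuous_on_compose2[OF hermite_poly_cont]) auto

lemma hermite_fun_meas [measurable]: "hermite_fun n \<in> borel_measurable borel"
  by (rule borel_measurable_continuous_onI[OF hermite_fun_cont])

lemma hf_sq: "(hermite_fun n x)^2 = hu n x * exp (-(x^2)) / sqrt pi"
proof -
  have p: "0 \<le> 2 ^ n * fact n * sqrt pi" by simp
  have e: "(exp (-(x^2/2)))^2 = exp (-(x^2))" by (simp add: exp_double[symmetric])
  show ?thesis unfolding hermite_fun_def hu_def
    by (simp add: power_divide power_mult_distrib e p real_sqrt_mult)
qed

lemma gauss_int:
  assumes a: "a > (0::real)"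
  shows "integrable lborel (\<lambda>x. exp (-a*x^2))" "(LINT x|lborel. exp (-a*x^2)) = sqrt (pi/a)"
proof -
  define \<sigma> where "\<sigma> = sqrt (1/(2*a))"
  have s2: "\<sigma>^2 = 1/(2*a)" using a by (simp add: \<sigma>_def)
  have eq: "exp (-a*x^2) = sqrt (pi/a) * normal_density 0 \<sigma> x" for x
  proof -
    have 1: "2 * pi * \<sigma>^2 = pi / a" using a by (simp add: s2)
    have 3: "2 * \<sigma>^2 = 1/a" using a by (simp add: s2)
    have 2: "x^2 / (2 * \<sigma>^2) = a*x^2" using a by (simp add: 3 field_simps)
    show ?thesis using a unfolding normal_density_def 1 by (simp add: 2)
  qed
  have sp: "\<sigma> > 0" using a by (simp add: \<sigma>_def)
  show "integrable lborel (\<lambda>x. exp (-a*x^2))" unfolding eq using sp by simp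
  show "(LINT x|lborel. exp (-a*x^2)) = sqrt (pi/a)" unfolding eq using sp by simp
qed

lemma sums_integral_dom:
  fixes g :: "real \<Rightarrow> complex" and h :: "nat \<Rightarrow> real \<Rightarrow> real"
  assumes gm [measurable]: "g \<in> borel_measurable lborel" and gb: "\<And>x. norm (g x) \<le> B"
    and hm [measurable]: "\<And>n. h n \<in> borel_measurable lborel" and h0: "\<And>n x. h n x \<ge> 0"
    and hs: "\<And>x. (\<lambda>n. h n x) sums S x" and Si: "integrable lborel S"
  shows "(\<lambda>n. LINT x|lborel. g x * of_real (h n x)) sums (LINT x|lborel. g x * of_real (S x))"
proof -
  have Sm [measurable]: "S \<in> borel_measurable lborel" using Si by auto
  have B0: "B \<ge> 0" using gb[of 0] norm_ge_zero order_trans by blast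
  have ps: "(\<Sum>n<N. h n x) \<le> S x" for N x
    using hs[of x] h0 sum_le_suminf[of "\<lambda>n. h n x" "{..<N}"] by (auto simp: sums_iff)
  have hS: "h n x \<le> S x" for n x
    using hs[of x] h0 sum_le_suminf[of "\<lambda>n. h n x" "{n}"] by (auto simp: sums_iff)
  have S0: "S x \<ge> 0" for x using ps[where N=0 and x=x] by simp
  have int_n: "integrable lborel (\<lambda>x. g x * of_real (h n x))" for n
  proof (rule Bochner_Integration.integrable_bound[where f="\<lambda>x. B * S x"])
    show "integrable lborel (\<lambda>x. B * S x)" using Si by simp
    show "AE x in lborel. norm (g x * of_real (h n x)) \<le> norm (B * S x)"
      using gb h0 hS S0 B0 by (auto simp: norm_mult intro!: mult_mono)
  qed simp
  have lim: "(\<lambda>N. LINT x|lborel. g x * of_real (\<Sum>n<N. h n x)) \<longlonglongrightarrow> (LINT x|lborel. g x * of_real (S x))"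
  proof (rule integral_dominated_convergence[where w="\<lambda>x. B * S x"])
    show "integrable lborel (\<lambda>x. B * S x)" using Si by simp
    show "AE x in lborel. (\<lambda>N. g x * of_real (\<Sum>n<N. h n x)) \<longlonglongrightarrow> g x * of_real (S x)"
    proof (rule AE_I2)
      fix x
      have "(\<lambda>N. \<Sum>n<N. h n x) \<longlonglongrightarrow> S x" using hs[of x] by (simp add: sums_def)
      hence "(\<lambda>N. complex_of_real (\<Sum>n<N. h n x)) \<longlonglongrightarrow> complex_of_real (S x)" by (rule tendsto_of_real)
      thus "(\<lambda>N. g x * of_real (\<Sum>n<N. h n x)) \<longlonglongrightarrow> g x * of_real (S x)" by (rule tendsto_mult_left)
    qed
    show "AE x in lborel. norm (g x * of_real (\<Sum>n<N. h n x)) \<le> B * S x" for N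
    proof (rule AE_I2)
      fix x
      have "norm (g x * of_real (\<Sum>n<N. h n x)) = norm (g x) * (\<Sum>n<N. h n x)"
        using h0 by (simp only: norm_mult norm_of_real) (simp add: sum_nonneg)
      also have "\<dots> \<le> B * S x" using gb ps B0 h0 by (intro mult_mono) (auto simp: sum_nonneg)
      finally show "norm (g x * of_real (\<Sum>n<N. h n x)) \<le> B * S x" .
    qed
  qed simp_all
  have "(LINT x|lborel. g x * of_real (\<Sum>n<N. h n x)) = (\<Sum>n<N. LINT x|lborel. g x * of_real (h n x))" for N
    using int_n by (simp add: sum_distrib_left integral_sum[symmetric])
  with lim show ?thesis by (simp add: sums_def)
qed

definition Gk :: "real \<Rightarrow> real \<Rightarrow> real" where
  "Gk r x = exp (-(x^2) * ((1-r)/(1+r))) / (sqrt pi * sqrt (1-r^2))"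

lemma hf_sums:
  assumes r: "0 \<le> r" "r < 1"
  shows "(\<lambda>n. (hermite_fun n x)^2 * r^n) sums Gk r x"
proof -
  have "(\<lambda>n. (exp (-(x^2)) / sqrt pi) * (hu n x * r^n)) sums ((exp (-(x^2)) / sqrt pi) * (exp (2*x^2*r/(1+r)) / sqrt (1-r^2)))"
    by (intro sums_mult mehler r)
  moreover have "(exp (-(x^2)) / sqrt pi) * (exp (2*x^2*r/(1+r)) / sqrt (1-r^2)) = Gk r x"
  proof -
    have "-(x^2) + 2*x^2*r/(1+r) = -(x^2) * ((1-r)/(1+r))" using r by (simp add: field_simps)
    thus ?thesis by (simp add: Gk_def exp_add[symmetric])
  qed
  ultimately show ?thesis by (simp add: hf_sq mult_ac)
qed

lemma Gk_int:
  assumes r: "0 \<le> r" "r < 1"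
  shows "integrable lborel (Gk r)" "(LINT x|lborel. Gk r x) = 1/(1-r)"
proof -
  have a: "(1-r)/(1+r) > 0" using r by simp
  have e: "Gk r x = exp (-((1-r)/(1+r))*x^2) / (sqrt pi * sqrt (1-r^2))" for x
    by (simp add: Gk_def mult_ac)
  show "integrable lborel (Gk r)" unfolding e[abs_def] using gauss_int(1)[OF a] by simp
  have "r * r < 1 * 1" using r by (intro mult_strict_mono') auto
  hence p: "1 - r^2 > 0" by (simp add: power2_eq_square)
  have "(LINT x|lborel. Gk r x) = sqrt (pi/((1-r)/(1+r))) / (sqrt pi * sqrt (1-r^2))"
    unfolding e[abs_def] using gauss_int(2)[OF a] by simp
  also have "\<dots> = 1/(1-r)"
  proof -
    have "1 - r^2 = (1-r)*(1+r)" by (simp add: power2_eq_square algebra_simps)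
    hence "sqrt (pi/((1-r)/(1+r))) / (sqrt pi * sqrt (1-r^2)) = sqrt pi * sqrt (1+r) / sqrt (1-r) / (sqrt pi * (sqrt (1-r) * sqrt (1+r)))"
      using r by (simp add: real_sqrt_mult real_sqrt_divide)
    also have "\<dots> = 1/(sqrt (1-r) * sqrt (1-r))" using r by (simp add: field_simps)
    also have "\<dots> = 1/(1-r)" using r by simp
    finally show ?thesis .
  qed
  finally show "(LINT x|lborel. Gk r x) = 1/(1-r)" .
qed

lemma hf_integrable: "integrable lborel (\<lambda>x. (hermite_fun n x)^2)"
proof (rule Bochner_Integration.integrable_bound[where f="\<lambda>x. Gk (1/2) x * 2^n"])
  show "integrable lborel (\<lambda>x. Gk (1/2) x * 2^n)" using Gk_int(1)[of "1/2"] by simp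
  show "AE x in lborel. norm ((hermite_fun n x)^2) \<le> norm (Gk (1/2) x * 2^n)"
  proof (intro AE_I2)
    fix x
    have s: "(\<lambda>n. (hermite_fun n x)^2 * (1/2)^n) sums Gk (1/2) x" by (rule hf_sums) auto
    have "(hermite_fun n x)^2 * (1/2)^n \<le> Gk (1/2) x"
      using s sum_le_suminf[of "\<lambda>n. (hermite_fun n x)^2 * (1/2)^n" "{n}"] by (auto simp: sums_iff)
    hence "(hermite_fun n x)^2 \<le> Gk (1/2) x * 2^n" by (simp add: field_simps)
    moreover have "Gk (1/2) x \<ge> 0" by (simp add: Gk_def power2_eq_square)
    ultimately show "norm ((hermite_fun n x)^2) \<le> norm (Gk (1/2) x * 2^n)" by simp
  qed
qed simp


lemma powser_zero_real:
  fixes d :: "nat \<Rightarrow> real"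
  assumes s: "\<And>r. 0 < r \<Longrightarrow> r < 1 \<Longrightarrow> (\<lambda>n. d n * r^n) sums 0"
  shows "d n = 0"
proof -
  define D where "D = Abs_fps d"
  have rad: "fps_conv_radius D \<ge> 1" unfolding fps_conv_radius_def D_def fps_nth_Abs_fps
    by (intro conv_radius_geI_ex') (use s in \<open>auto simp: sums_iff\<close>)
  have ev: "eval_fps D r = 0" if "0 < r" "r < 1" for r
    using s[OF that] unfolding eval_fps_def D_def fps_nth_Abs_fps by (simp add: sums_iff)
  show ?thesis
  proof (induction n rule: less_induct)
    case (less n)
    show "d n = 0"
    proof (rule ccontr)
      assume dn: "d n \<noteq> 0"
      hence D0: "D \<noteq> 0" by (auto simp: D_def fps_eq_iff)
      have sub: "n \<le> subdegree D" by (rule subdegree_geI) (use less D0 in \<open>auto simp: D_def\<close>)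
      define E where "E = fps_shift n D"
      have DE: "E * fps_X^n = D" unfolding E_def by (rule fps_shift_times_fps_X_power[OF sub])
      have radE: "fps_conv_radius E \<ge> 1" using rad by (simp add: E_def)
      have lt: "ereal (norm r) < fps_conv_radius E" if "\<bar>r\<bar> < 1" for r :: real
      proof -
        have "ereal (norm r) < ereal 1" using that by simp
        also have "ereal 1 \<le> fps_conv_radius E" using radE by (simp add: one_ereal_def)
        finally show ?thesis .
      qed
      have evE: "eval_fps E r = 0" if "0 < r" "r < 1" for r
      proof -
        have "eval_fps D r = eval_fps E r * r^n"
          unfolding DE[symmetric] using lt[of r] that by (subst eval_fps_mult) auto
        with ev[OF that] that show ?thesis by simp
      qed
      have "continuous (at (0::real) within {0<..}) (eval_fps E)"
        by (rule continuous_eval_fps) (use lt[of 0] in simp)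
      hence t1: "(eval_fps E \<longlongrightarrow> eval_fps E 0) (at_right 0)" by (simp add: continuous_within)
      have "eventually (\<lambda>r. eval_fps E r = 0) (at_right (0::real))"
        unfolding eventually_at_right[OF zero_less_one] using evE by (intro exI[of _ 1]) auto
      hence t2: "(eval_fps E \<longlongrightarrow> 0) (at_right 0)" by (rule tendsto_eventually)
      have "eval_fps E 0 = 0" using tendsto_unique[OF _ t1 t2] by simp
      hence "d n = 0" by (simp add: eval_fps_at_0 E_def D_def)
      with dn show False by simp
    qed
  qed
qed

lemma hf_norm: "(LINT x|lborel. (hermite_fun n x)^2) = 1"
proof -
  define a where "a = (\<lambda>n. LINT x|lborel. (hermite_fun n x)^2)"
  have "(\<lambda>n. a n - 1) n = 0"
  proof (rule powser_zero_real)
    fix r :: real assume r: "0 < r" "r < 1"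
    have S: "(\<lambda>n. LINT x|lborel. (1::complex) * of_real ((hermite_fun n x)^2 * r^n)) sums (LINT x|lborel. (1::complex) * of_real (Gk r x))"
      using r by (intro sums_integral_dom[where B=1] hf_sums Gk_int) auto
    have e1: "(LINT x|lborel. (1::complex) * of_real ((hermite_fun n x)^2 * r^n)) = of_real (a n * r^n)" for n
      by (simp only: mult_1 integral_complex_of_real integral_mult_left_zero a_def)
    have e2: "(LINT x|lborel. (1::complex) * of_real (Gk r x)) = of_real (1/(1-r))"
      using Gk_int[of r] r by (simp only: mult_1 integral_complex_of_real)
    have "(\<lambda>n. complex_of_real (a n * r^n)) sums complex_of_real (1/(1-r))"
      using S unfolding e1 e2 .
    hence s1: "(\<lambda>n. a n * r^n) sums (1/(1-r))" by (simp only: sums_of_real_iff)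
    have s2: "(\<lambda>n. r^n) sums (1/(1-r))" using geometric_sums[of r] r by simp
    show "(\<lambda>n. (a n - 1) * r^n) sums 0" using sums_diff[OF s1 s2] by (simp add: algebra_simps)
  qed
  thus ?thesis by (simp add: a_def)
qed


definition cc :: "(real \<Rightarrow> complex) \<Rightarrow> nat \<Rightarrow> complex" where
  "cc f n = (LINT x|lborel. f x * complex_of_real ((hermite_fun n x)^2))"

lemma cc_integrable:
  assumes fm [measurable]: "f \<in> borel_measurable borel" and fb: "\<And>x. norm (f x) \<le> B"
  shows "integrable lborel (\<lambda>x. f x * complex_of_real ((hermite_fun n x)^2))"
proof (rule Bochner_Integration.integrable_bound[where f="\<lambda>x. B * (hermite_fun n x)^2"])
  show "integrable lborel (\<lambda>x. B * (hermite_fun n x)^2)" using hf_integrable[of n] by simp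
  show "AE x in lborel. norm (f x * complex_of_real ((hermite_fun n x)^2)) \<le> norm (B * (hermite_fun n x)^2)"
  proof (rule AE_I2)
    fix x
    have B0: "B \<ge> 0" using fb[of x] norm_ge_zero order_trans by blast
    have "norm (f x * complex_of_real ((hermite_fun n x)^2)) = norm (f x) * (hermite_fun n x)^2"
      by (simp only: norm_mult norm_of_real) simp
    also have "\<dots> \<le> B * (hermite_fun n x)^2" by (intro mult_right_mono fb) auto
    also have "\<dots> = norm (B * (hermite_fun n x)^2)" using B0 by simp
    finally show "norm (f x * complex_of_real ((hermite_fun n x)^2)) \<le> norm (B * (hermite_fun n x)^2)" .
  qed
qed simp

lemma cc_bound:
  assumes fm [measurable]: "f \<in> borel_measurable borel" and fb: "\<And>x. norm (f x) \<le> B"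
  shows "norm (cc f n) \<le> B"
proof -
  have nm: "norm (f x * complex_of_real ((hermite_fun n x)^2)) = norm (f x) * (hermite_fun n x)^2" for x
    by (simp only: norm_mult norm_of_real) simp
  have i1: "integrable lborel (\<lambda>x. norm (f x) * (hermite_fun n x)^2)"
    using integrable_norm[OF cc_integrable[OF fm fb, of n]] unfolding nm .
  have "norm (cc f n) \<le> (LINT x|lborel. norm (f x * complex_of_real ((hermite_fun n x)^2)))"
    unfolding cc_def by (rule integral_norm_bound)
  also have "\<dots> = (LINT x|lborel. norm (f x) * (hermite_fun n x)^2)" by (simp only: nm)
  also have "\<dots> \<le> (LINT x|lborel. B * (hermite_fun n x)^2)"
    using i1 hf_integrable[of n] fb
    by (intro integral_mono) (auto intro!: mult_right_mono)
  also have "\<dots> = B" using hf_norm[of n] by simp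
  finally show ?thesis .
qed

lemma hyp_ids:
  assumes t: "t > 0"
  shows "cosh t / sinh t = (1 + exp(-2*t))/(1 - exp(-2*t))"
    and "exp (-t) * sqrt (cosh t / sinh t) / sqrt (1 - (exp (-2*t))^2) = 1/(2 * sinh t)"
proof -
  define E where "E = exp t"
  have E1: "E > 1" using t by (simp add: E_def)
  have em: "exp (-t) = 1/E" by (simp add: E_def exp_minus field_simps)
  have em2: "exp (-2*t) = 1/E^2" by (simp add: E_def exp_minus field_simps power2_eq_square exp_add[symmetric])
  have sh: "sinh t = (E - 1/E)/2" by (simp add: sinh_def E_def exp_minus field_simps)
  have ch: "cosh t = (E + 1/E)/2" by (simp add: cosh_def E_def exp_minus field_simps)
  have E2: "E^2 - 1 > 0" using E1 by (simp add: power2_eq_square) (metis less_1_mult mult_less_cancel_right2 order.strict_trans zero_less_one)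
  show 1: "cosh t / sinh t = (1 + exp(-2*t))/(1 - exp(-2*t))"
    unfolding sh ch em2 using E1 E2 by (simp add: field_simps power2_eq_square)
  have s0: "sinh t > 0" using t by simp
  have c0: "cosh t / sinh t > 0" using s0 by simp
  have r0: "1 - (exp (-2*t))^2 > 0"
  proof -
    have "exp (-2*t) < 1" "exp (-2*t) > 0" using t by auto
    hence "exp (-2*t) * exp (-2*t) < 1 * 1" by (intro mult_strict_mono') auto
    thus ?thesis by (simp add: power2_eq_square)
  qed
  have lhs0: "exp (-t) * sqrt (cosh t / sinh t) / sqrt (1 - (exp (-2*t))^2) \<ge> 0" using c0 r0 by simp
  have rhs0: "1/(2 * sinh t) \<ge> 0" using s0 by simp
  have "(exp (-t) * sqrt (cosh t / sinh t) / sqrt (1 - (exp (-2*t))^2))^2 = (exp (-t))^2 * (cosh t / sinh t) / (1 - (exp (-2*t))^2)"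
    using c0 r0 by (simp add: power_divide power_mult_distrib)
  also have "\<dots> = (1/(2 * sinh t))^2"
  proof -
    have a1: "(exp (-t))^2 = exp (-2*t)" by (simp add: exp_double[symmetric])
    have a2: "1 - (exp (-2*t))^2 = exp (-2*t) * (4 * sinh t * cosh t)"
      unfolding sh ch em2 using E1 by (simp add: field_simps power2_eq_square)
    have "sinh t \<noteq> 0" "cosh t \<noteq> 0" using s0 by auto
    thus ?thesis unfolding a1 a2 by (simp add: field_simps power2_eq_square)
  qed
  finally show "exp (-t) * sqrt (cosh t / sinh t) / sqrt (1 - (exp (-2*t))^2) = 1/(2 * sinh t)"
    using lhs0 rhs0 by (subst (asm) power2_eq_iff_nonneg) auto
qed


lemma heat_trace:
  assumes fm [measurable]: "f \<in> borel_measurable borel" and fb: "\<And>x. norm (f x) \<le> B" and t: "t > 0"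
  shows "(\<lambda>n. cc f n * of_real (exp (-(2*real n+1)*t))) sums
     (of_real (1/(2 * sqrt pi)) * of_real (1/sinh t) * (LINT x|lborel. f (x * sqrt (cosh t / sinh t)) * of_real (exp (-(x^2)))))"
proof -
  define r where "r = exp (-2*t)"
  have r0: "0 < r" and r1: "r < 1" using t by (auto simp: r_def)
  have S: "(\<lambda>n. LINT x|lborel. f x * of_real ((hermite_fun n x)^2 * r^n)) sums (LINT x|lborel. f x * of_real (Gk r x))"
    using r0 r1 fb by (intro sums_integral_dom[where B=B] hf_sums Gk_int) auto
  have e1: "(LINT x|lborel. f x * of_real ((hermite_fun n x)^2 * r^n)) = cc f n * of_real (r^n)" for n
  proof -
    have "(\<lambda>x. f x * of_real ((hermite_fun n x)^2 * r^n)) = (\<lambda>x. (f x * of_real ((hermite_fun n x)^2)) * of_real (r^n))"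
      by (simp add: mult_ac)
    thus ?thesis by (simp only: integral_mult_left_zero cc_def)
  qed
  define I where "I = (LINT x|lborel. f x * of_real (Gk r x))"
  have S2: "(\<lambda>n. of_real (exp (-t)) * (cc f n * of_real (r^n))) sums (of_real (exp (-t)) * I)"
    using S unfolding e1 I_def[symmetric] by (rule sums_mult)
  have tm: "of_real (exp (-t)) * (cc f n * of_real (r^n)) = cc f n * of_real (exp (-(2*real n+1)*t))" for n
  proof -
    have "exp (-(2*real n+1)*t) = exp (-t) * exp (real n * (-2*t))" by (simp add: exp_add[symmetric] algebra_simps)
    also have "\<dots> = exp (-t) * r^n" unfolding r_def by (subst exp_of_nat_mult[symmetric]) simp
    finally show ?thesis by (simp add: mult_ac)
  qed
  define \<kappa> where "\<kappa> = sqrt (cosh t / sinh t)"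
  have s0: "sinh t > 0" using t by simp
  have k0: "\<kappa> > 0" using s0 by (simp add: \<kappa>_def)
  have k2: "\<kappa>^2 = (1+r)/(1-r)" using hyp_ids(1)[OF t] s0 by (simp add: \<kappa>_def r_def)
  define J where "J = (LINT x|lborel. f (x * \<kappa>) * of_real (exp (-(x^2))))"
  have Gk_k: "Gk r (\<kappa> * y) = exp (-(y^2)) / (sqrt pi * sqrt (1-r^2))" for y
  proof -
    have k2': "\<kappa>^2 * (1-r) = 1 + r" using k2 r1 by (simp add: field_simps)
    have "(\<kappa>*y)^2 * ((1-r)/(1+r)) = y^2 * (\<kappa>^2 * (1-r)) / (1+r)" by (simp add: power_mult_distrib)
    also have "\<dots> = y^2" unfolding k2' using r0 by simp
    finally have "(\<kappa>*y)^2 * ((1-r)/(1+r)) = y^2" .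
    thus ?thesis unfolding Gk_def by (metis minus_mult_left)
  qed
  have "I = \<bar>\<kappa>\<bar> *\<^sub>R (LINT y|lborel. f (0 + \<kappa> * y) * of_real (Gk r (0 + \<kappa> * y)))"
    unfolding I_def using k0 by (intro lborel_integral_real_affine) simp
  also have "\<dots> = of_real \<kappa> * (J * of_real (1 / (sqrt pi * sqrt (1-r^2))))"
  proof -
    have "(\<lambda>y. f (0 + \<kappa> * y) * of_real (Gk r (0 + \<kappa> * y))) = (\<lambda>y. (f (y * \<kappa>) * of_real (exp (-(y^2)))) * of_real (1 / (sqrt pi * sqrt (1-r^2))))"
      by (rule ext, simp only: add_0_left Gk_k, simp add: mult_ac)
    thus ?thesis using k0 by (simp only: integral_mult_left_zero J_def scaleR_conv_of_real) simp
  qed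
  finally have "of_real (exp (-t)) * I = of_real (exp (-t) * \<kappa> / sqrt (1-r^2) / sqrt pi) * J"
    by (simp add: field_simps)
  also have "exp (-t) * \<kappa> / sqrt (1-r^2) = 1/(2 * sinh t)"
    using hyp_ids(2)[OF t] by (simp add: \<kappa>_def r_def)
  finally have V: "of_real (exp (-t)) * I = of_real (1/(2 * sqrt pi)) * of_real (1/sinh t) * J"
    by (simp add: field_simps)
  show ?thesis using S2 unfolding tm V J_def \<kappa>_def .
qed


lemma cpowr_minus: "(x::complex) powr (-a) = inverse (x powr a)"
  by (simp add: powr_def exp_minus)

lemma mellin_exp:
  fixes s :: complex and a :: real
  assumes s: "Re s > 0" and a: "a > 0"
  shows "set_integrable lborel {0<..} (\<lambda>t. of_real t powr (s-1) * of_real (exp (-(a*t))))"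
    and "(LINT t:{0<..}|lborel. of_real t powr (s-1) * of_real (exp (-(a*t)))) = Gamma s * of_real a powr (-s)"
proof -
  define g where "g = (\<lambda>(a::real) (t::real). (of_real t powr (s-1) * of_real (exp (-(a*t))) :: complex))"
  have geq: "g b = (\<lambda>t. of_real t powr (s-1) / of_real (exp (b*t)))" for b
    by (auto simp: g_def fun_eq_iff exp_minus field_simps)
  have meas: "(\<lambda>t. indicator {0<..} t *\<^sub>R g b t) \<in> borel_measurable lborel" for b
    unfolding g_def by measurable
  have si: "set_integrable lborel {0<..} (g b)" if "b > 0" for b
  proof -
    have "set_integrable lebesgue {0<..} (g b)"
      unfolding geq by (rule absolutely_integrable_Gamma_integral[OF s that])
    thus ?thesis unfolding set_integrable_def using integrable_completion[OF meas[of b]] by simp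
  qed
  show "set_integrable lborel {0<..} (\<lambda>t. of_real t powr (s-1) * of_real (exp (-(a*t))))"
    using si[OF a] by (simp add: g_def)
  have V1: "(LINT t:{0<..}|lborel. g 1 t) = Gamma s"
  proof -
    have "(LINT t:{0<..}|lborel. g 1 t) = integral {0<..} (g 1)"
      by (rule set_borel_integral_eq_integral(2)[OF si]) simp
    also have "\<dots> = Gamma s" using Gamma_integral_complex'[OF s] unfolding geq by (simp add: integral_unique)
    finally show ?thesis .
  qed
  have "(LINT t:{0<..}|lborel. g 1 t) = \<bar>a\<bar> *\<^sub>R (LINT u|lborel. indicator {0<..} (0 + a*u) *\<^sub>R g 1 (0 + a*u))"
    unfolding set_lebesgue_integral_def using a by (intro lborel_integral_real_affine) simp
  also have "(\<lambda>u. indicator {0<..} (0 + a*u) *\<^sub>R g 1 (0 + a*u)) = (\<lambda>u. of_real a powr (s-1) * (indicator {0<..} u *\<^sub>R g a u))"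
  proof (rule ext)
    fix u :: real
    show "indicator {0<..} (0 + a*u) *\<^sub>R g 1 (0 + a*u) = of_real a powr (s-1) * (indicator {0<..} u *\<^sub>R g a u)"
    proof (cases "u > 0")
      case True
      have "complex_of_real (a*u) powr (s-1) = of_real a powr (s-1) * of_real u powr (s-1)"
        using a True by (simp add: powr_times_real)
      thus ?thesis using True a by (simp add: g_def indicator_def zero_less_mult_iff)
    next
      case False
      thus ?thesis using a by (simp add: indicator_def zero_less_mult_iff)
    qed
  qed
  also have "(LINT u|lborel. of_real a powr (s-1) * (indicator {0<..} u *\<^sub>R g a u)) = of_real a powr (s-1) * (LINT t:{0<..}|lborel. g a t)"
    unfolding set_lebesgue_integral_def by (rule integral_mult_right_zero)
  finally have "Gamma s = of_real a * of_real a powr (s-1) * (LINT t:{0<..}|lborel. g a t)"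
    using a V1 by (simp add: scaleR_conv_of_real)
  also have "of_real a * of_real a powr (s-1) = (of_real a powr s :: complex)"
  proof -
    have "(of_real a powr s :: complex) = of_real a powr (1 + (s-1))" by simp
    also have "\<dots> = of_real a powr 1 * of_real a powr (s-1)" by (rule powr_add)
    finally show ?thesis by (simp add: powr_to_1)
  qed
  finally have "(LINT t:{0<..}|lborel. g a t) = Gamma s * inverse (of_real a powr s)"
    using a by (simp add: field_simps)
  thus "(LINT t:{0<..}|lborel. of_real t powr (s-1) * of_real (exp (-(a*t)))) = Gamma s * of_real a powr (-s)"
    by (simp add: g_def cpowr_minus)
qed


lemma mellin_exp_real:
  fixes \<sigma> a :: real
  assumes s: "\<sigma> > 0" and a: "a > 0"
  shows "set_integrable lborel {0<..} (\<lambda>t. t powr (\<sigma>-1) * exp (-(a*t)))"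
    and "(LINT t:{0<..}|lborel. t powr (\<sigma>-1) * exp (-(a*t))) = Gamma \<sigma> * a powr (-\<sigma>)"
proof -
  have eq: "(\<lambda>t. indicator {0<..} t *\<^sub>R (of_real t powr (of_real \<sigma> - 1) * of_real (exp (-(a*t))) :: complex))
      = (\<lambda>t. complex_of_real (indicator {0<..} t *\<^sub>R (t powr (\<sigma>-1) * exp (-(a*t)))))"
  proof (rule ext)
    fix t :: real
    show "indicator {0<..} t *\<^sub>R (of_real t powr (of_real \<sigma> - 1) * of_real (exp (-(a*t))) :: complex)
      = complex_of_real (indicator {0<..} t *\<^sub>R (t powr (\<sigma>-1) * exp (-(a*t))))"
    proof (cases "t > 0")
      case True
      have "(of_real t powr (of_real \<sigma> - 1) :: complex) = of_real t powr (of_real (\<sigma> - 1))" by simp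
      also have "\<dots> = of_real (t powr (\<sigma>-1))" using True by (intro powr_of_real) simp
      finally show ?thesis using True by (simp add: indicator_def)
    qed (simp add: indicator_def)
  qed
  have "set_integrable lborel {0<..} (\<lambda>t. of_real t powr (of_real \<sigma> - 1) * of_real (exp (-(a*t))) :: complex)"
    by (rule mellin_exp(1)) (use s a in auto)
  thus "set_integrable lborel {0<..} (\<lambda>t. t powr (\<sigma>-1) * exp (-(a*t)))"
    unfolding set_integrable_def eq complex_of_real_integrable_eq .
  have "(LINT t:{0<..}|lborel. of_real t powr (of_real \<sigma> - 1) * of_real (exp (-(a*t))) :: complex) = Gamma (of_real \<sigma>) * of_real a powr (- of_real \<sigma>)"
    by (rule mellin_exp(2)) (use s a in auto)
  also have "\<dots> = of_real (Gamma \<sigma> * a powr (-\<sigma>))"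
    using a by (simp add: Gamma_complex_of_real powr_of_real[symmetric])
  finally show "(LINT t:{0<..}|lborel. t powr (\<sigma>-1) * exp (-(a*t))) = Gamma \<sigma> * a powr (-\<sigma>)"
    unfolding set_lebesgue_integral_def eq integral_complex_of_real by (metis of_real_eq_iff of_real_mult)
qed

definition Cfps :: "(real \<Rightarrow> complex) \<Rightarrow> complex fps" where "Cfps f = Abs_fps (cc f)"
definition Tf :: "(real \<Rightarrow> complex) \<Rightarrow> real \<Rightarrow> complex" where
  "Tf f t = of_real (exp (-t)) * eval_fps (Cfps f) (of_real (exp (-2*t)))"

context
  fixes f :: "real \<Rightarrow> complex" and B :: real
  assumes fm [measurable]: "f \<in> borel_measurable borel" and fb: "\<And>x. norm (f x) \<le> B"
begin

lemma B0: "B \<ge> 0" using fb[of 0] norm_ge_zero order_trans by blast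

lemma Cfps_radius: "fps_conv_radius (Cfps f) \<ge> 1"
  unfolding fps_conv_radius_def Cfps_def fps_nth_Abs_fps
proof (intro conv_radius_geI_ex')
  fix r :: real assume r: "0 < r" "ereal r < 1"
  hence r1: "r < 1" by simp
  show "summable (\<lambda>n. cc f n * of_real r ^ n)"
  proof (rule summable_comparison_test_ev)
    show "\<forall>\<^sub>F n in sequentially. norm (cc f n * of_real r ^ n) \<le> B * r^n"
      using r cc_bound[OF fm fb] by (intro always_eventually allI) (auto simp: norm_mult norm_power intro!: mult_right_mono)
    show "summable (\<lambda>n. B * r^n)" using r r1 by (intro summable_mult summable_geometric) simp
  qed
qed

lemma Cfps_rad_lt: "norm (z::complex) < 1 \<Longrightarrow> ereal (norm z) < fps_conv_radius (Cfps f)"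
proof -
  assume "norm z < 1"
  hence "ereal (norm z) < ereal 1" by simp
  also have "ereal 1 \<le> fps_conv_radius (Cfps f)" using Cfps_radius by (simp add: one_ereal_def)
  finally show ?thesis .
qed

lemma Tf_sums:
  assumes t: "t > 0"
  shows "(\<lambda>n. cc f n * of_real (exp (-(2*real n+1)*t))) sums Tf f t"
proof -
  have "norm (complex_of_real (exp (-2*t))) < 1" using t by simp
  from sums_eval_fps[OF Cfps_rad_lt[OF this]]
  have "(\<lambda>n. cc f n * of_real (exp (-2*t)) ^ n) sums eval_fps (Cfps f) (of_real (exp (-2*t)))"
    by (simp add: Cfps_def)
  hence S1: "(\<lambda>n. of_real (exp (-t)) * (cc f n * of_real (exp (-2*t)) ^ n)) sums Tf f t"
    unfolding Tf_def by (rule sums_mult)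
  have tm: "of_real (exp (-t)) * (cc f n * of_real (exp (-2*t)) ^ n) = cc f n * of_real (exp (-(2*real n+1)*t))" for n
  proof -
    have "exp (-(2*real n+1)*t) = exp (-t) * exp (real n * (-2*t))" by (simp add: exp_add[symmetric] algebra_simps)
    also have "\<dots> = exp (-t) * exp (-2*t) ^ n" by (subst exp_of_nat_mult[symmetric]) simp
    finally show ?thesis by (simp add: mult_ac)
  qed
  show ?thesis using S1 unfolding tm .
qed

lemma Tf_kernel:
  assumes t: "t > 0"
  shows "Tf f t = of_real (1/(2 * sqrt pi)) * of_real (1/sinh t) * (LINT x|lborel. f (x * sqrt (cosh t / sinh t)) * of_real (exp (-(x^2))))"
  using sums_unique2[OF Tf_sums[OF t] heat_trace[OF fm fb t]] .

lemma Tf_cont: "continuous_on {0<..} (Tf f)"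
proof -
  have sub: "(\<lambda>x. complex_of_real (exp (-2*x))) ` {0<..} \<subseteq> eball 0 (fps_conv_radius (Cfps f))"
  proof (rule image_subsetI)
    fix x :: real assume "x \<in> {0<..}"
    hence "norm (complex_of_real (exp (-2*x))) < 1" by simp
    from Cfps_rad_lt[OF this] show "complex_of_real (exp (-2*x)) \<in> eball 0 (fps_conv_radius (Cfps f))"
      by (simp add: dist_norm)
  qed
  have c1: "continuous_on {0<..} (\<lambda>x. eval_fps (Cfps f) (complex_of_real (exp (-2*x))))"
    by (rule continuous_on_eval_fps'[OF _ sub]) (intro continuous_intros)
  show ?thesis unfolding Tf_def[abs_def] by (intro continuous_intros c1)
qed

lemma Tf_bound:
  assumes t: "t > 0"
  shows "norm (Tf f t) \<le> B * exp (-t) / (1 - exp (-2*t))"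
proof -
  have e: "exp (-(2*real n+1)*t) = exp (-t) * exp (-2*t) ^ n" for n
  proof -
    have "exp (-(2*real n+1)*t) = exp (-t) * exp (real n * (-2*t))" by (simp add: exp_add[symmetric] algebra_simps)
    also have "\<dots> = exp (-t) * exp (-2*t) ^ n" by (subst exp_of_nat_mult[symmetric]) simp
    finally show ?thesis .
  qed
  have g: "(\<lambda>n. B * exp (-t) * exp (-2*t) ^ n) sums (B * exp (-t) * (1 / (1 - exp (-2*t))))"
    using t by (intro sums_mult geometric_sums) simp
  have "norm (Tf f t) = norm (\<Sum>n. cc f n * of_real (exp (-(2*real n+1)*t)))"
    using Tf_sums[OF t] by (simp add: sums_iff)
  also have "\<dots> \<le> (\<Sum>n. B * exp (-t) * exp (-2*t) ^ n)"
  proof (rule norm_suminf_le)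
    show "norm (cc f n * of_real (exp (-(2*real n+1)*t))) \<le> B * exp (-t) * exp (-2*t) ^ n" for n
      using cc_bound[OF fm fb, of n] unfolding e by (simp add: norm_mult norm_power mult_right_mono)
    show "summable (\<lambda>n. B * exp (-t) * exp (-2*t) ^ n)" using g by (simp add: sums_iff)
  qed
  also have "\<dots> = B * exp (-t) / (1 - exp (-2*t))" using g by (simp add: sums_iff)
  finally show ?thesis .
qed

lemma Tf_bound1:
  assumes t: "t \<ge> 1"
  shows "norm (Tf f t) \<le> 2 * B * exp (-t)"
proof -
  have "exp (2*t) \<ge> 1 + 2*t" by (rule exp_ge_add_one_self)
  hence "exp (2*t) \<ge> 2" using t by linarith
  hence "exp (-2*t) \<le> 1/2" by (simp add: exp_minus field_simps)
  hence d: "1 - exp (-2*t) \<ge> 1/2" by simp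
  have "norm (Tf f t) \<le> B * exp (-t) / (1 - exp (-2*t))" using t by (intro Tf_bound) simp
  also have "\<dots> \<le> B * exp (-t) / (1/2)" using d B0 t by (intro divide_left_mono) auto
  finally show ?thesis by simp
qed

end


lemma Gamma_nz_Re: "Re (s::complex) > 0 \<Longrightarrow> Gamma s \<noteq> 0"
  by (intro Gamma_nonzero) (auto elim!: nonpos_Ints_cases)

lemma summable_odd_powr:
  assumes "\<sigma> > 1"
  shows "summable (\<lambda>n. real (2*n+1) powr (-\<sigma>))"
proof (rule summable_comparison_test_ev)
  show "summable (\<lambda>n. real n powr (-\<sigma>))" using assms by (simp add: summable_real_powr_iff)
  show "\<forall>\<^sub>F n in sequentially. norm (real (2*n+1) powr (-\<sigma>)) \<le> real n powr (-\<sigma>)"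
    using eventually_ge_at_top[of "1::nat"]
    by eventually_elim (use assms in \<open>auto intro!: powr_mono2'\<close>)
qed

context
  fixes f :: "real \<Rightarrow> complex" and B :: real
  assumes fm [measurable]: "f \<in> borel_measurable borel" and fb: "\<And>x. norm (f x) \<le> B"
begin

lemma Tf_meas [measurable]: "(\<lambda>t. indicator {0<..} t *\<^sub>R (of_real t powr (s-1) * Tf f t)) \<in> borel_measurable lborel"
  unfolding measurable_lborel2
  by (intro borel_measurable_continuous_on_indicator continuous_intros Tf_cont[OF fm fb]) auto

lemma mellin_trace:
  assumes s: "Re s > 1"
  shows "set_integrable lborel {0<..} (\<lambda>t. of_real t powr (s-1) * Tf f t)"
    and "Gamma s * osc_trace f s = (LINT t:{0<..}|lborel. of_real t powr (s-1) * Tf f t)"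
proof -
  define \<sigma> where "\<sigma> = Re s"
  have s0: "Re s > 0" "\<sigma> > 1" "\<sigma> > 0" using s by (auto simp: \<sigma>_def)
  define F where "F = (\<lambda>n t. cc f n * (of_real t powr (s-1) * of_real (exp (-((2*real n+1)*t)))))"
  define G where "G = (\<lambda>n t. indicator {0<..} t *\<^sub>R F n t)"
  have a0: "2*real n+1 > 0" for n by simp
  have Gint: "integrable lborel (G n)" for n
    unfolding G_def F_def set_integrable_def[symmetric]
    by (intro set_integrable_mult_right mellin_exp(1)[OF s0(1) a0])
  have Gval: "(LINT t|lborel. G n t) = Gamma s * (of_real (real (2*n+1)) powr (-s) * cc f n)" for n
    unfolding G_def F_def set_lebesgue_integral_def[symmetric] set_integral_mult_right mellin_exp(2)[OF s0(1) a0]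
    by (simp add: mult_ac add.commute)
  have normG: "norm (G n t) = indicator {0<..} t *\<^sub>R (norm (cc f n) * (t powr (\<sigma>-1) * exp (-((2*real n+1)*t))))" for n t
  proof (cases "t > 0")
    case True
    have "norm (of_real t powr (s-1) :: complex) = Re (of_real t) powr Re (s-1)"
      by (rule norm_powr_real_powr) (use True in auto)
    thus ?thesis using True by (simp add: G_def F_def norm_mult \<sigma>_def)
  qed (simp add: G_def)
  have intnorm: "(LINT t|lborel. norm (G n t)) = norm (cc f n) * (Gamma \<sigma> * real (2*n+1) powr (-\<sigma>))" for n
    unfolding normG set_lebesgue_integral_def[symmetric] set_integral_mult_right mellin_exp_real(2)[OF s0(3) a0]
    by (simp add: add.commute)
  have summ1: "summable (\<lambda>n. LINT t|lborel. norm (G n t))"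
  proof (rule summable_comparison_test_ev)
    show "summable (\<lambda>n. B * Gamma \<sigma> * real (2*n+1) powr (-\<sigma>))"
      using summable_odd_powr[OF s0(2)] by (intro summable_mult) simp
    show "\<forall>\<^sub>F n in sequentially. norm (LINT t|lborel. norm (G n t)) \<le> B * Gamma \<sigma> * real (2*n+1) powr (-\<sigma>)"
    proof (intro always_eventually allI)
      fix n
      have g: "Gamma \<sigma> * real (2*n+1) powr (-\<sigma>) \<ge> 0" using s0 by (simp add: Gamma_real_pos less_imp_le)
      have "norm (LINT t|lborel. norm (G n t)) = norm (cc f n) * (Gamma \<sigma> * real (2*n+1) powr (-\<sigma>))"
        unfolding intnorm using g by simp
      also have "\<dots> \<le> B * (Gamma \<sigma> * real (2*n+1) powr (-\<sigma>))"
        using g cc_bound[OF fm fb] by (intro mult_right_mono) auto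
      finally show "norm (LINT t|lborel. norm (G n t)) \<le> B * Gamma \<sigma> * real (2*n+1) powr (-\<sigma>)" by (simp add: mult_ac)
    qed
  qed
  have summ2: "AE t in lborel. summable (\<lambda>n. norm (G n t))"
  proof (rule AE_I2)
    fix t :: real
    show "summable (\<lambda>n. norm (G n t))"
    proof (cases "t > 0")
      case True
      show ?thesis
      proof (rule summable_comparison_test_ev)
        show "summable (\<lambda>n. B * (t powr (\<sigma>-1) * exp (-t)) * exp (-2*t) ^ n)"
          using True by (intro summable_mult summable_geometric) simp
        show "\<forall>\<^sub>F n in sequentially. norm (norm (G n t)) \<le> B * (t powr (\<sigma>-1) * exp (-t)) * exp (-2*t) ^ n"
        proof (intro always_eventually allI)
          fix n
          have e: "exp (-((2*real n+1)*t)) = exp (-t) * exp (-2*t) ^ n"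
          proof -
            have "exp (-((2*real n+1)*t)) = exp (-t) * exp (real n * (-2*t))" by (simp add: exp_add[symmetric] algebra_simps)
            also have "\<dots> = exp (-t) * exp (-2*t) ^ n" by (subst exp_of_nat_mult[symmetric]) simp
            finally show ?thesis .
          qed
          show "norm (norm (G n t)) \<le> B * (t powr (\<sigma>-1) * exp (-t)) * exp (-2*t) ^ n"
            unfolding normG e using True cc_bound[OF fm fb, of n]
            by (simp add: mult_ac mult_right_mono)
        qed
      qed
    qed (simp add: G_def)
  qed
  have sumG: "(\<Sum>n. G n t) = indicator {0<..} t *\<^sub>R (of_real t powr (s-1) * Tf f t)" for t
  proof (cases "t > 0")
    case True
    have "(\<lambda>n. of_real t powr (s-1) * (cc f n * of_real (exp (-(2*real n+1)*t)))) sums (of_real t powr (s-1) * Tf f t)"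
      by (intro sums_mult Tf_sums[OF fm fb True])
    moreover have "G n t = of_real t powr (s-1) * (cc f n * of_real (exp (-(2*real n+1)*t)))" for n
      using True by (simp add: G_def F_def mult_ac algebra_simps)
    ultimately show ?thesis using True by (simp add: sums_iff)
  qed (simp add: G_def)
  have I1: "integrable lborel (\<lambda>t. (\<Sum>n. G n t))" by (rule integrable_suminf[OF Gint summ2 summ1])
  thus "set_integrable lborel {0<..} (\<lambda>t. of_real t powr (s-1) * Tf f t)"
    unfolding set_integrable_def sumG .
  have I2: "(\<lambda>n. LINT t|lborel. G n t) sums (LINT t|lborel. (\<Sum>n. G n t))" by (rule sums_integral[OF Gint summ2 summ1])
  hence I3: "(\<lambda>n. Gamma s * (of_real (real (2*n+1)) powr (-s) * cc f n)) sums (LINT t:{0<..}|lborel. of_real t powr (s-1) * Tf f t)"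
    unfolding Gval sumG set_lebesgue_integral_def .
  have gnz: "Gamma s \<noteq> 0" using s0 by (intro Gamma_nz_Re) auto
  have sm: "summable (\<lambda>n. of_real (real (2*n+1)) powr (-s) * cc f n)" using I3 gnz by (simp add: sums_iff)
  have "Gamma s * osc_trace f s = (\<Sum>n. Gamma s * (of_real (real (2*n+1)) powr (-s) * cc f n))"
    unfolding osc_trace_def cc_def[symmetric] using sm by (subst suminf_mult) simp_all
  also have "\<dots> = (LINT t:{0<..}|lborel. of_real t powr (s-1) * Tf f t)" using I3 by (simp add: sums_iff)
  finally show "Gamma s * osc_trace f s = (LINT t:{0<..}|lborel. of_real t powr (s-1) * Tf f t)" .
qed

end


definition rhof :: "(real \<Rightarrow> complex) \<Rightarrow> complex \<Rightarrow> complex" where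
  "rhof f s = (LINT t:{1..}|lborel. of_real t powr (s-1) * Tf f t)"

context
  fixes f :: "real \<Rightarrow> complex" and B :: real
  assumes fm [measurable]: "f \<in> borel_measurable borel" and fb: "\<And>x. norm (f x) \<le> B"
begin

lemma Tf_cont1: "continuous_on {1..b} (Tf f)"
  using Tf_cont[OF fm fb] by (rule continuous_on_subset) auto

lemma rho_part_holo:
  assumes b: "b \<ge> 1"
  shows "(\<lambda>s. LINT t:{1..b}|lborel. of_real t powr (s-1) * Tf f t) holomorphic_on UNIV"
proof -
  have c0: "continuous_on {1..b} (\<lambda>t. of_real t powr (s-1) * Tf f t)" for s
    by (intro continuous_intros Tf_cont1) (auto simp: complex_nonpos_Reals_iff)
  have eq: "(LINT t:{1..b}|lborel. of_real t powr (s-1) * Tf f t) = integral (cbox 1 b) (\<lambda>t. of_real t powr (s-1) * Tf f t)" for s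
    using set_borel_integral_eq_integral(2)[OF borel_integrable_atLeastAtMost'[OF c0[of s]]] by simp
  have "(\<lambda>s. integral (cbox 1 b) (\<lambda>t. of_real t powr (s-1) * Tf f t)) holomorphic_on UNIV"
  proof (rule leibniz_rule_holomorphic[where fx="\<lambda>s t. Ln (of_real t) * of_real t powr (s-1) * Tf f t"])
    fix s :: complex and t :: real assume t: "t \<in> cbox 1 b"
    hence t0: "t > 0" by auto
    show "((\<lambda>s. of_real t powr (s-1) * Tf f t) has_field_derivative Ln (of_real t) * of_real t powr (s-1) * Tf f t) (at s within UNIV)"
    proof -
      have d1: "((\<lambda>x. of_real t powr x) has_field_derivative Ln (of_real t) * of_real t powr (s-1)) (at ((\<lambda>x. x - 1) s))"
        using has_field_derivative_powr_right[of "complex_of_real t" "s-1"] t0 by simp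
      have d2: "((\<lambda>x. x - 1) has_field_derivative 1) (at s)" by (auto intro!: derivative_eq_intros)
      from DERIV_chain2[where f="\<lambda>x. of_real t powr x" and g="\<lambda>x. x - 1", OF d1 d2]
      have pd: "((\<lambda>x. of_real t powr (x-1)) has_field_derivative Ln (of_real t) * of_real t powr (s-1)) (at s)"
        by (auto intro: derivative_eq_intros)
      show ?thesis using DERIV_mult[OF pd DERIV_const[of "Tf f t" "at s"]] by simp
    qed
  next
    fix s :: complex
    show "(\<lambda>t. of_real t powr (s-1) * Tf f t) integrable_on cbox 1 b"
      using c0[of s] by (intro integrable_continuous) simp
  next
    show "continuous_on (UNIV \<times> cbox 1 b) (\<lambda>(s, t). Ln (of_real t) * of_real t powr (s-1) * Tf f t)"
    proof -
      have ct: "continuous_on (UNIV \<times> cbox 1 b) (\<lambda>z. Tf f (snd z))"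
        by (rule continuous_on_compose2[OF Tf_cont1[of b]]) (auto intro!: continuous_intros)
      have "continuous_on (UNIV \<times> cbox 1 b) (\<lambda>z. Ln (of_real (snd z)) * of_real (snd z) powr (fst z - 1) * Tf f (snd z))"
        by (intro continuous_intros ct continuous_on_compose2[OF continuous_on_Ln[of "{z. Re z > 0}"]])
           (auto simp: complex_nonpos_Reals_iff)
      thus ?thesis by (simp add: case_prod_unfold)
    qed
  qed auto
  thus ?thesis by (simp add: eq)
qed

lemma rho_holo: "rhof f holomorphic_on UNIV"
proof -
  have "rhof f field_differentiable (at z)" for z
  proof -
    define K where "K = max 0 (Re z)"
    define g where "g = (\<lambda>y::real. 2 * B * (y powr ((K+1)-1) * exp (-(1*y))))"
    have gi: "set_integrable lborel {1..} g"
    proof -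
      have "set_integrable lborel {0<..} (\<lambda>t. t powr ((K+1)-1) * exp (-(1*t)))"
        by (rule mellin_exp_real(1)) (auto simp: K_def)
      hence "set_integrable lborel {1..} (\<lambda>t. t powr ((K+1)-1) * exp (-(1*t)))"
        by (rule set_integrable_subset) auto
      thus ?thesis unfolding g_def by (rule set_integrable_mult_right)
    qed
    have ul: "uniform_limit (cball z 1) (\<lambda>b s. LINT t:{1..b}|lborel. of_real t powr (s-1) * Tf f t)
                (\<lambda>s. LINT t:{1..}|lborel. of_real t powr (s-1) * Tf f t) at_top"
    proof (rule uniform_limit_set_lebesgue_integral_at_top[where g=g])
      fix s :: complex and y :: real assume s: "s \<in> cball z 1" and y: "1 \<le> y"
      have "norm (of_real y powr (s-1) :: complex) = Re (of_real y) powr Re (s-1)"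
        by (rule norm_powr_real_powr) (use y in auto)
      hence n1: "norm (of_real y powr (s-1) :: complex) = y powr (Re s - 1)" by simp
      have "\<bar>Re s - Re z\<bar> \<le> 1"
        using s abs_Re_le_cmod[of "s - z"] by (simp add: dist_norm norm_minus_commute)
      hence "Re s - 1 \<le> K" by (simp add: K_def)
      hence n2: "y powr (Re s - 1) \<le> y powr K" using y by (intro powr_mono) auto
      have n3: "norm (Tf f y) \<le> 2 * B * exp (-y)" by (rule Tf_bound1[OF fm fb y])
      have "norm (of_real y powr (s-1) * Tf f y) = y powr (Re s - 1) * norm (Tf f y)"
        by (simp add: norm_mult n1)
      also have "\<dots> \<le> y powr K * (2 * B * exp (-y))"
        using n2 n3 by (intro mult_mono) auto
      also have "\<dots> = g y" by (simp add: g_def)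
      finally show "norm (of_real y powr (s-1) * Tf f y) \<le> g y" .
    next
      fix s :: complex
      show "set_borel_measurable lborel {1..} (\<lambda>t. of_real t powr (s-1) * Tf f t)"
        unfolding set_borel_measurable_def measurable_lborel2
      proof (intro borel_measurable_continuous_on_indicator continuous_intros)
        show "continuous_on {1..} (Tf f)" using Tf_cont[OF fm fb] by (rule continuous_on_subset) auto
      qed (auto simp: complex_nonpos_Reals_iff)
    qed (auto simp: gi)
    have ev: "\<forall>\<^sub>F b in at_top. continuous_on (cball z 1) (\<lambda>s. LINT t:{1..b}|lborel. of_real t powr (s-1) * Tf f t)
               \<and> (\<lambda>s. LINT t:{1..b}|lborel. of_real t powr (s-1) * Tf f t) holomorphic_on ball z 1"
      using eventually_ge_at_top[of "1::real"]
    proof eventually_elim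
      case (elim b)
      from rho_part_holo[OF elim] show ?case
        by (meson holomorphic_on_imp_continuous_on holomorphic_on_subset subset_UNIV)
    qed
    have "rhof f = (\<lambda>s. LINT t:{1..}|lborel. of_real t powr (s-1) * Tf f t)"
      by (simp add: rhof_def[abs_def])
    hence "rhof f holomorphic_on ball z 1"
      using holomorphic_uniform_limit[OF ev ul] by auto
    thus ?thesis by (rule holomorphic_on_imp_differentiable_at) auto
  qed
  thus ?thesis by (simp add: holomorphic_on_def field_differentiable_at_within)
qed

end


theorem mainTheorem4:
  fixes f :: "real \<Rightarrow> complex"
  assumes "bounded (range f)" and "uniformly_continuous_on UNIV f"
  shows "\<exists>\<rho>. \<rho> holomorphic_on UNIV \<and>
    (\<forall>s::complex. Re s > 1 \<longrightarrow>
       Gamma s * osc_trace f s =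
         complex_of_real (1 / (2 * sqrt pi)) *
           (LBINT t=0..1. (LINT x|lborel.
              (complex_of_real t) powr (s - 1) * complex_of_real (1 / sinh t)
              * f (x * sqrt (cosh t / sinh t)) * complex_of_real (exp (- (x^2)))))
         + \<rho> s)"
proof -
  obtain B where fb: "\<And>x. norm (f x) \<le> B" using assms(1) by (auto simp: bounded_iff)
  have fm [measurable]: "f \<in> borel_measurable borel"
    using uniformly_continuous_imp_continuous[OF assms(2)] by (rule borel_measurable_continuous_onI)
  show ?thesis
  proof (intro exI conjI allI impI)
    show "rhof f holomorphic_on UNIV" by (rule rho_holo[OF fm fb])
  next
    fix s :: complex assume s: "Re s > 1"
    define h where "h = (\<lambda>t. of_real t powr (s-1) * Tf f t)"
    define K where "K = (\<lambda>t. LINT x|lborel.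
              (complex_of_real t) powr (s - 1) * complex_of_real (1 / sinh t)
              * f (x * sqrt (cosh t / sinh t)) * complex_of_real (exp (- (x^2))))"
    have hi: "set_integrable lborel {0<..} h" unfolding h_def by (rule mellin_trace(1)[OF fm fb s])
    have "Gamma s * osc_trace f s = (LINT t:{0<..}|lborel. h t)" unfolding h_def by (rule mellin_trace(2)[OF fm fb s])
    also have "{0<..} = {0<..<1} \<union> {1::real..}" by auto
    also have "(LINT t:{0<..<1} \<union> {1..}|lborel. h t) = (LINT t:{0<..<1}|lborel. h t) + (LINT t:{1..}|lborel. h t)"
      by (rule set_integral_Un) (auto intro: set_integrable_subset[OF hi])
    also have "(LINT t:{1..}|lborel. h t) = rhof f s" by (simp add: rhof_def h_def)
    also have "(LINT t:{0<..<1}|lborel. h t) = (LINT t:{0<..<1}|lborel. complex_of_real (1 / (2 * sqrt pi)) * K t)"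
    proof (rule set_lebesgue_integral_cong)
      show "\<forall>t. t \<in> {0<..<1} \<longrightarrow> h t = complex_of_real (1 / (2 * sqrt pi)) * K t"
      proof (intro allI impI)
        fix t :: real assume t: "t \<in> {0<..<1}"
        have "K t = (LINT x|lborel. (complex_of_real t powr (s - 1) * complex_of_real (1 / sinh t))
              * (f (x * sqrt (cosh t / sinh t)) * complex_of_real (exp (- (x^2)))))"
          unfolding K_def by (simp only: mult.assoc)
        also have "\<dots> = complex_of_real t powr (s - 1) * complex_of_real (1 / sinh t) *
              (LINT x|lborel. f (x * sqrt (cosh t / sinh t)) * complex_of_real (exp (- (x^2))))"
          by (rule integral_mult_right_zero)
        finally show "h t = complex_of_real (1 / (2 * sqrt pi)) * K t"
          using Tf_kernel[OF fm fb, of t] t by (simp add: h_def mult_ac)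
      qed
    qed simp
    also have "\<dots> = complex_of_real (1 / (2 * sqrt pi)) * (LINT t:{0<..<1}|lborel. K t)"
      by (rule set_integral_mult_right)
    also have "(LINT t:{0<..<1}|lborel. K t) = (LBINT t=0..1. K t)"
    proof -
      have "einterval 0 1 = {0<..<(1::real)}" by (auto simp: einterval_def)
      thus ?thesis by (simp add: interval_lebesgue_integral_def)
    qed
    finally show "Gamma s * osc_trace f s = complex_of_real (1 / (2 * sqrt pi)) * (LBINT t=0..1. K t) + rhof f s" .
  qed
qed


end
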